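(* Fix $c=2$. For any $\mathcal{E}\in[0,1]$ and any real $v\in H^2(\mathbb{R})$, $$\langle K_-(2)v,v\rangle_{L^2}=\|L_-v\|^2_{L^2}+\|u_0v_x-u_0'v\|^2_{L^2}.$$
   Context: For $\mathcal{E}\in(0,1)$, $u_0(x)=\sqrt{1-\mathcal{E}}\,\mathrm{sn}\big(x\sqrt{(1+\mathcal{E})/2},\,k\big)$ with $k=\sqrt{(1-\mathcal{E})/(1+\mathcal{E})}$ (Jacobi elliptic function of modulus $k$); for $\mathcal{E}=0$, $u_0(x)=\tanh(x/\sqrt2)$ (black soliton); for $\mathcal{E}=1$, $u_0\equiv0$. In all cases $u_0$ is real, $u_0''+(1-u_0^2)u_0=0$ and $(u_0')^2=\frac12[(1-u_0^2)^2-\mathcal{E}^2]$. Define $L_-v=-v''+(u_0^2-1)v$, $M_-v=v''''-3(u_0^2v')'+(u_0^2-1)v$, and $K_-(c)=M_--cL_-$. The quadratic form is $\langle K_-(2)v,v\rangle_{L^2}=\int_{\mathbb{R}}[v_{xx}^2+3u_0^2v_x^2+(u_0^2-1)v^2]\,dx-2\int_{\mathbb{R}}[v_x^2+(u_0^2-1)v^2]\,dx$. *)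

theory Defs
  imports "HOL-Analysis.Analysis"
begin

definition ellipticF :: "real \<Rightarrow> real \<Rightarrow> real" where
  "ellipticF k \<phi> =
     (if 0 \<le> \<phi> then integral {0..\<phi>} (\<lambda>\<theta>. 1 / sqrt (1 - k\<^sup>2 * (sin \<theta>)\<^sup>2))
      else - integral {\<phi>..0} (\<lambda>\<theta>. 1 / sqrt (1 - k\<^sup>2 * (sin \<theta>)\<^sup>2)))"

text \<open>Jacobi amplitude am(x,k): the inverse of phi |-> F(phi,k) (well defined for 0 <= k < 1).\<close>
definition jacobi_am :: "real \<Rightarrow> real \<Rightarrow> real" where
  "jacobi_am k x = (THE \<phi>. ellipticF k \<phi> = x)"

definition jacobi_sn :: "real \<Rightarrow> real \<Rightarrow> real" where
  "jacobi_sn k x = sin (jacobi_am k x)"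

text \<open>The periodic wave / black soliton / zero solution u_0, parametrised by E in [0,1].\<close>
definition u0 :: "real \<Rightarrow> real \<Rightarrow> real" where
  "u0 E x =
     (if E = 0 then tanh (x / sqrt 2)
      else if E = 1 then 0
      else sqrt (1 - E) *
           jacobi_sn (sqrt ((1 - E) / (1 + E))) (x * sqrt ((1 + E) / 2)))"

definition sq_integrable :: "(real \<Rightarrow> real) \<Rightarrow> bool" where
  "sq_integrable f \<longleftrightarrow> f \<in> borel_measurable lborel \<and> integrable lborel (\<lambda>x. (f x)\<^sup>2)"

text \<open>v is (the continuous representative of) an element of H^2(R) with first derivative v1
  (continuous representative) and second weak derivative v2:
  v, v1, v2 in L^2, v(b)-v(a) = int_a^b v1, v1(b)-v1(a) = int_a^b v2.\<close>
definition H2_with_derivs :: "(real \<Rightarrow> real) \<Rightarrow> (real \<Rightarrow> real) \<Rightarrow> (real \<Rightarrow> real) \<Rightarrow> bool" where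
  "H2_with_derivs v v1 v2 \<longleftrightarrow>
     sq_integrable v \<and> sq_integrable v1 \<and> sq_integrable v2 \<and>
     (\<forall>a b. a \<le> b \<longrightarrow> (v1 has_integral (v b - v a)) {a..b}
                      \<and> (v2 has_integral (v1 b - v1 a)) {a..b})"

end

theory Submission
  imports Defs
begin


lemma lim_zero_of_integrable:
  fixes h :: "real \<Rightarrow> real"
  assumes int: "integrable lborel h" and lim: "(h \<longlongrightarrow> L) at_top"
  shows "L = 0"
proof (rule ccontr)
  assume "L \<noteq> 0"
  then have pos: "\<bar>L\<bar>/2 > 0" by simp
  from lim have "eventually (\<lambda>x. dist (h x) L < \<bar>L\<bar>/2) at_top"
    using pos tendstoD by blast
  then obtain M where M: "\<And>x. x \<ge> M \<Longrightarrow> dist (h x) L < \<bar>L\<bar>/2"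
    by (auto simp: eventually_at_top_linorder)
  have "integrable lborel (\<lambda>x. (\<bar>L\<bar>/2) * indicator {M..} x)"
  proof (rule Bochner_Integration.integrable_bound[OF int])
    show "(\<lambda>x. \<bar>L\<bar> / 2 * indicator {M..} x) \<in> borel_measurable lborel" by simp
    show "AE x in lborel. norm (\<bar>L\<bar> / 2 * indicator {M..} x :: real) \<le> norm (h x)"
    proof (rule AE_I2)
      fix x show "norm (\<bar>L\<bar> / 2 * indicator {M..} x :: real) \<le> norm (h x)"
      proof (cases "x \<ge> M")
        case True then show ?thesis using M[OF True] by (simp add: dist_real_def indicator_def abs_if split: if_splits)
      qed auto
    qed
  qed
  then have "integrable lborel (\<lambda>x. (2/\<bar>L\<bar>) * ((\<bar>L\<bar>/2) * indicator {M..} x))"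
    by (rule integrable_mult_right)
  then have "integrable lborel (indicator {M..} :: real \<Rightarrow> real)"
    using pos by simp
  then have fin: "emeasure lborel {M..} < top" by (simp add: integrable_indicator_iff)
  define m where "m = measure lborel {M..}"
  have e: "emeasure lborel {M..} = ennreal m"
    unfolding m_def using fin by (simp add: emeasure_eq_ennreal_measure)
  have "emeasure lborel {M..M+m+1} \<le> emeasure lborel {M..}" by (rule emeasure_mono) auto
  moreover have "m \<ge> 0" unfolding m_def by simp
  ultimately show False using e by simp
qed

lemma lim_zero_of_integrable_bot:
  fixes h :: "real \<Rightarrow> real"
  assumes int: "integrable lborel h" and lim: "(h \<longlongrightarrow> L) at_bot"
  shows "L = 0"
proof (rule ccontr)
  assume "L \<noteq> 0"
  then have pos: "\<bar>L\<bar>/2 > 0" by simp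
  from lim have "eventually (\<lambda>x. dist (h x) L < \<bar>L\<bar>/2) at_bot"
    using pos tendstoD by blast
  then obtain M where M: "\<And>x. x \<le> M \<Longrightarrow> dist (h x) L < \<bar>L\<bar>/2"
    by (auto simp: eventually_at_bot_linorder)
  have "integrable lborel (\<lambda>x. (\<bar>L\<bar>/2) * indicator {..M} x)"
  proof (rule Bochner_Integration.integrable_bound[OF int])
    show "(\<lambda>x. \<bar>L\<bar> / 2 * indicator {..M} x) \<in> borel_measurable lborel" by simp
    show "AE x in lborel. norm (\<bar>L\<bar> / 2 * indicator {..M} x :: real) \<le> norm (h x)"
    proof (rule AE_I2)
      fix x show "norm (\<bar>L\<bar> / 2 * indicator {..M} x :: real) \<le> norm (h x)"
      proof (cases "x \<le> M")
        case True then show ?thesis using M[OF True] by (simp add: dist_real_def indicator_def abs_if split: if_splits)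
      qed auto
    qed
  qed
  then have "integrable lborel (\<lambda>x. (2/\<bar>L\<bar>) * ((\<bar>L\<bar>/2) * indicator {..M} x))"
    by (rule integrable_mult_right)
  then have "integrable lborel (indicator {..M} :: real \<Rightarrow> real)"
    using pos by simp
  then have fin: "emeasure lborel {..M} < top" by (simp add: integrable_indicator_iff)
  define m where "m = measure lborel {..M}"
  have e: "emeasure lborel {..M} = ennreal m"
    unfolding m_def using fin by (simp add: emeasure_eq_ennreal_measure)
  have "emeasure lborel {M-m-1..M} \<le> emeasure lborel {..M}" by (rule emeasure_mono) auto
  moreover have "m \<ge> 0" unfolding m_def by simp
  ultimately show False using e by simp
qed



lemma integral_total_deriv_zero:
  fixes h D :: "real \<Rightarrow> real"
  assumes inth: "integrable lborel h" and intD: "integrable lborel D"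
    and ftc: "\<And>a b. a \<le> b \<Longrightarrow> (\<integral>x. D x * indicator {a..b} x \<partial>lborel) = h b - h a"
  shows "(\<integral>x. D x \<partial>lborel) = 0"
proof -
  have si: "set_integrable lborel A D" if "A \<in> sets lborel" for A
    unfolding set_integrable_def using integrable_mult_indicator[OF that intD] .
  have eqI: "set_lebesgue_integral lborel {a..b} D = h b - h a" if "a \<le> b" for a b
    using ftc[OF that] by (simp add: set_lebesgue_integral_def mult.commute)
  define Ip where "Ip = set_lebesgue_integral lborel {0..} D"
  define Im where "Im = set_lebesgue_integral lborel {..0} D"
  have t1: "((\<lambda>b. set_lebesgue_integral lborel {0..b} D) \<longlongrightarrow> Ip) at_top"
    unfolding Ip_def by (rule tendsto_set_lebesgue_integral_at_top) (auto intro: si)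
  have "((\<lambda>b. h 0 + set_lebesgue_integral lborel {0..b} D) \<longlongrightarrow> h 0 + Ip) at_top"
    by (intro tendsto_intros t1)
  then have "(h \<longlongrightarrow> h 0 + Ip) at_top"
  proof (rule Lim_transform_eventually)
    show "\<forall>\<^sub>F x in at_top. h 0 + set_lebesgue_integral lborel {0..x} D = h x"
      using eventually_ge_at_top[of "0::real"] by eventually_elim (simp add: eqI)
  qed
  then have z1: "h 0 + Ip = 0" by (rule lim_zero_of_integrable[OF inth])
  have t2: "((\<lambda>a. set_lebesgue_integral lborel {a..0} D) \<longlongrightarrow> Im) at_bot"
    unfolding Im_def by (rule tendsto_set_lebesgue_integral_at_bot) (auto intro: si)
  have "((\<lambda>a. h 0 - set_lebesgue_integral lborel {a..0} D) \<longlongrightarrow> h 0 - Im) at_bot"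
    by (intro tendsto_intros t2)
  then have "(h \<longlongrightarrow> h 0 - Im) at_bot"
  proof (rule Lim_transform_eventually)
    show "\<forall>\<^sub>F x in at_bot. h 0 - set_lebesgue_integral lborel {x..0} D = h x"
      using eventually_le_at_bot[of "0::real"] by eventually_elim (simp add: eqI)
  qed
  then have z2: "h 0 - Im = 0" by (rule lim_zero_of_integrable_bot[OF inth])
  have split: "D x = indicator {0..} x * D x + indicator {..0} x * D x - indicator {0} x * D x" for x
    by (auto simp: indicator_def)
  have i0: "(\<integral>x. indicator {0} x * D x \<partial>lborel) = 0"
  proof (rule integral_eq_zero_AE)
    show "AE x in lborel. indicator {0} x * D x = 0"
      using AE_lborel_singleton[of "0::real"] by eventually_elim simp
  qed
  have "(\<integral>x. D x \<partial>lborel) = (\<integral>x. indicator {0..} x * D x + indicator {..0} x * D x - indicator {0} x * D x \<partial>lborel)"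
    by (subst split) simp
  also have "\<dots> = Ip + Im - (\<integral>x. indicator {0} x * D x \<partial>lborel)"
    using si[of "{0..}"] si[of "{..0}"] si[of "{0}"]
    by (simp add: Ip_def Im_def set_lebesgue_integral_def set_integrable_def)
  also have "\<dots> = 0" using z1 z2 i0 by simp
  finally show ?thesis .
qed



lemma bounded_on_Icc:
  fixes F :: "real \<Rightarrow> real"
  assumes "continuous_on {a..b} F"
  obtains C where "C \<ge> 0" "\<And>x. x \<in> {a..b} \<Longrightarrow> \<bar>F x\<bar> \<le> C"
proof -
  have "bounded (F ` {a..b})" using compact_continuous_image[OF assms] compact_imp_bounded by blast
  then obtain B where "\<forall>x \<in> {a..b}. norm (F x) \<le> B" by (auto simp: bounded_iff)
  then show ?thesis using that[of "max B 0"] by fastforce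
qed

lemma weak_prod_rule:
  fixes F F' v1 v2 :: "real \<Rightarrow> real"
  assumes ab: "a \<le> b"
    and F: "\<And>x. (F has_real_derivative F' x) (at x)"
    and cF': "continuous_on UNIV F'"
    and cv1: "continuous_on UNIV v1"
    and v2m[measurable]: "v2 \<in> borel_measurable lborel"
    and v2i: "\<And>s t. integrable lborel (\<lambda>x. v2 x * indicator {s..t} x)"
    and v2ftc: "\<And>s t. s \<le> t \<Longrightarrow> (\<integral>x. v2 x * indicator {s..t} x \<partial>lborel) = v1 t - v1 s"
  shows "(\<integral>x. F x * v2 x * indicator {a..b} x \<partial>lborel)
          = F b * v1 b - F a * v1 a - (\<integral>x. F' x * v1 x * indicator {a..b} x \<partial>lborel)"
proof -
  have F'm[measurable]: "F' \<in> borel_measurable lborel"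
    using borel_measurable_continuous_onI[OF cF'] by simp
  have cF: "continuous_on UNIV F"
    using F by (meson DERIV_isCont continuous_at_imp_continuous_on)
  obtain C where C0: "C \<ge> 0" and C: "\<And>x. x \<in> {a..b} \<Longrightarrow> \<bar>F' x\<bar> \<le> C"
    using bounded_on_Icc[of a b F'] continuous_on_subset[OF cF' subset_UNIV] by metis
  define f where "f = (\<lambda>x t. F' t * v2 x * indicator {a..b} x * indicator {x..b} t :: real)"
  define g where "g = (\<lambda>x t. C * (\<bar>v2 x\<bar> * indicator {a..b} x) * indicator {a..b} t :: real)"
  have fm: "case_prod f \<in> borel_measurable (lborel \<Otimes>\<^sub>M lborel)"
    unfolding f_def split_beta' indicator_def atLeastAtMost_iff by measurable
  have gm: "case_prod g \<in> borel_measurable (lborel \<Otimes>\<^sub>M lborel)"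
    unfolding g_def split_beta' by measurable
  have v2abs: "integrable lborel (\<lambda>x. \<bar>v2 x\<bar> * indicator {a..b} x)"
    using integrable_abs[OF v2i[of a b]] by (simp add: abs_mult)
  have gi: "integrable (lborel \<Otimes>\<^sub>M lborel) (case_prod g)"
  proof (rule lborel_pair.Fubini_integrable[OF gm])
    have "(\<lambda>x. \<integral>t. norm (case_prod g (x, t)) \<partial>lborel) = (\<lambda>x. (C * (b - a)) * (\<bar>v2 x\<bar> * indicator {a..b} x))"
      using ab C0 by (auto simp: g_def abs_mult)
    then show "integrable lborel (\<lambda>x. \<integral>t. norm (case_prod g (x, t)) \<partial>lborel)"
      using v2abs by simp
    show "AE x in lborel. integrable lborel (\<lambda>t. case_prod g (x, t))"
    proof (rule AE_I2)
      fix x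
      have "integrable lborel (\<lambda>t. (C * (\<bar>v2 x\<bar> * indicator {a..b} x)) * (indicator {a..b} t :: real))"
        by (intro integrable_mult_right integrable_real_indicator) (auto simp: emeasure_lborel_Icc_eq)
      then show "integrable lborel (\<lambda>t. case_prod g (x, t))" by (simp add: g_def)
    qed
  qed
  have fi: "integrable (lborel \<Otimes>\<^sub>M lborel) (case_prod f)"
  proof (rule Bochner_Integration.integrable_bound[OF gi fm])
    show "AE p in lborel \<Otimes>\<^sub>M lborel. norm (case_prod f p) \<le> norm (case_prod g p)"
    proof (rule AE_I2, clarify)
      fix x t
      show "norm (f x t) \<le> norm (g x t)"
      proof (cases "x \<in> {a..b} \<and> t \<in> {x..b}")
        case True
        then have "t \<in> {a..b}" by auto
        then have "\<bar>F' t\<bar> \<le> C" by (rule C)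
        then show ?thesis using True C0
          by (auto simp: f_def g_def abs_mult intro!: mult_right_mono)
      next
        case False then show ?thesis by (auto simp: f_def g_def)
      qed
    qed
  qed
  have fub: "(\<integral>t. (\<integral>x. f x t \<partial>lborel) \<partial>lborel) = (\<integral>x. (\<integral>t. f x t \<partial>lborel) \<partial>lborel)"
    using lborel_pair.Fubini_integral[OF fi] .
  have inner_t: "(\<integral>t. f x t \<partial>lborel) = (F b - F x) * (v2 x * indicator {a..b} x)" for x
  proof (cases "x \<in> {a..b}")
    case True
    have "f x t = (v2 x * indicator {a..b} x) * (F' t * indicator {x..b} t)" for t
      by (simp add: f_def)
    then have "(\<integral>t. f x t \<partial>lborel) = (\<integral>t. (v2 x * indicator {a..b} x) * (F' t * indicator {x..b} t) \<partial>lborel)"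
      by presburger
    also have "\<dots> = (v2 x * indicator {a..b} x) * (\<integral>t. F' t * indicator {x..b} t \<partial>lborel)"
      by (rule integral_mult_right_zero)
    also have "(\<integral>t. F' t * indicator {x..b} t \<partial>lborel) = F b - F x"
      using True F cF' by (intro integral_FTC_Icc_real) (auto simp: continuous_on_eq_continuous_at)
    finally show ?thesis by simp
  next
    case False then show ?thesis by (simp add: f_def)
  qed
  have inner_x: "(\<integral>x. f x t \<partial>lborel) = F' t * indicator {a..b} t * (v1 t - v1 a)" for t
  proof (cases "t \<in> {a..b}")
    case True
    have "f x t = (F' t * indicator {a..b} t) * (v2 x * indicator {a..t} x)" for x
      using True by (auto simp: f_def indicator_def)
    then have "(\<integral>x. f x t \<partial>lborel) = (F' t * indicator {a..b} t) * (\<integral>x. v2 x * indicator {a..t} x \<partial>lborel)"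
      by simp
    also have "\<dots> = F' t * indicator {a..b} t * (v1 t - v1 a)" using True v2ftc[of a t] by simp
    finally show ?thesis .
  next
    case False
    then have "f x t = 0" for x by (auto simp: f_def indicator_def)
    then show ?thesis using False by simp
  qed
  obtain CF where CF: "\<And>x. x \<in> {a..b} \<Longrightarrow> \<bar>F x\<bar> \<le> CF"
    using bounded_on_Icc[of a b F] continuous_on_subset[OF cF subset_UNIV] by metis
  have Fm[measurable]: "F \<in> borel_measurable lborel"
    using borel_measurable_continuous_onI[OF cF] by simp
  have Fv2i: "integrable lborel (\<lambda>x. F x * v2 x * indicator {a..b} x)"
  proof (rule Bochner_Integration.integrable_bound[of _ "\<lambda>x. CF * (\<bar>v2 x\<bar> * indicator {a..b} x)"])
    show "integrable lborel (\<lambda>x. CF * (\<bar>v2 x\<bar> * indicator {a..b} x))" using v2abs by simp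
    show "(\<lambda>x. F x * v2 x * indicator {a..b} x) \<in> borel_measurable lborel" by measurable
    show "AE x in lborel. norm (F x * v2 x * indicator {a..b} x) \<le> norm (CF * (\<bar>v2 x\<bar> * indicator {a..b} x))"
    proof (rule AE_I2)
      fix x show "norm (F x * v2 x * indicator {a..b} x) \<le> norm (CF * (\<bar>v2 x\<bar> * indicator {a..b} x))"
      proof (cases "x \<in> {a..b}")
        case True then show ?thesis using CF[OF True] by (auto simp: abs_mult intro!: mult_right_mono)
      qed simp
    qed
  qed
  have F'v1i: "integrable lborel (\<lambda>x. F' x * v1 x * indicator {a..b} x)"
    using cF' cv1 by (intro borel_integrable_atLeastAtMost) (auto simp: continuous_on_eq_continuous_at intro!: continuous_intros)
  have F'i: "integrable lborel (\<lambda>x. F' x * indicator {a..b} x)"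
    using cF' by (intro borel_integrable_atLeastAtMost) (auto simp: continuous_on_eq_continuous_at)
  have "(\<integral>x. (\<integral>t. f x t \<partial>lborel) \<partial>lborel)
      = F b * (\<integral>x. v2 x * indicator {a..b} x \<partial>lborel) - (\<integral>x. F x * v2 x * indicator {a..b} x \<partial>lborel)"
    unfolding inner_t using v2i[of a b] Fv2i by (simp add: algebra_simps)
  also have "\<dots> = F b * (v1 b - v1 a) - (\<integral>x. F x * v2 x * indicator {a..b} x \<partial>lborel)"
    using v2ftc[OF ab] by simp
  finally have 1: "(\<integral>x. (\<integral>t. f x t \<partial>lborel) \<partial>lborel) = F b * (v1 b - v1 a) - (\<integral>x. F x * v2 x * indicator {a..b} x \<partial>lborel)" .
  have "(\<integral>t. (\<integral>x. f x t \<partial>lborel) \<partial>lborel)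
      = (\<integral>t. F' t * v1 t * indicator {a..b} t \<partial>lborel) - v1 a * (\<integral>t. F' t * indicator {a..b} t \<partial>lborel)"
  proof -
    have "(\<integral>t. (\<integral>x. f x t \<partial>lborel) \<partial>lborel) = (\<integral>t. F' t * v1 t * indicator {a..b} t - v1 a * (F' t * indicator {a..b} t) \<partial>lborel)"
      unfolding inner_x by (simp add: algebra_simps)
    also have "\<dots> = (\<integral>t. F' t * v1 t * indicator {a..b} t \<partial>lborel) - (\<integral>t. v1 a * (F' t * indicator {a..b} t) \<partial>lborel)"
      by (rule Bochner_Integration.integral_diff[OF F'v1i integrable_mult_right[OF F'i]])
    finally show ?thesis by simp
  qed
  also have "(\<integral>t. F' t * indicator {a..b} t \<partial>lborel) = F b - F a"
    using ab F cF' by (intro integral_FTC_Icc_real) (auto simp: continuous_on_eq_continuous_at)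
  finally have 2: "(\<integral>t. (\<integral>x. f x t \<partial>lborel) \<partial>lborel) = (\<integral>t. F' t * v1 t * indicator {a..b} t \<partial>lborel) - v1 a * (F b - F a)" .
  show ?thesis using fub 1 2 by (simp add: algebra_simps)
qed



lemma abs_le_sq1: "\<bar>y::real\<bar> \<le> y\<^sup>2 + 1"
proof (cases "\<bar>y\<bar> \<le> 1")
  case True then show ?thesis by (smt (verit) zero_le_power2)
next
  case False
  then have "\<bar>y\<bar> * 1 \<le> \<bar>y\<bar> * \<bar>y\<bar>" by (intro mult_left_mono) auto
  then show ?thesis by (simp add: power2_eq_square)
qed

lemma sq_loc_int:
  assumes "sq_integrable f"
  shows "integrable lborel (\<lambda>x. f x * indicator {s..t} x)"
proof (rule Bochner_Integration.integrable_bound[of _ "\<lambda>x. (f x)\<^sup>2 + indicator {s..t} x"])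
  show "integrable lborel (\<lambda>x. (f x)\<^sup>2 + indicator {s..t} x)"
    using assms unfolding sq_integrable_def
    by (intro Bochner_Integration.integrable_add) (auto intro!: integrable_real_indicator simp: emeasure_lborel_Icc_eq)
  have fm[measurable]: "f \<in> borel_measurable lborel" using assms by (simp add: sq_integrable_def)
  show "(\<lambda>x. f x * indicator {s..t} x) \<in> borel_measurable lborel"
    by measurable
  show "AE x in lborel. norm (f x * indicator {s..t} x) \<le> norm ((f x)\<^sup>2 + indicator {s..t} x)"
    by (rule AE_I2) (auto simp: indicator_def abs_le_sq1)
qed

lemma cont_from_local:
  fixes g :: "real \<Rightarrow> real"
  assumes "\<And>a b. continuous_on {a..b} g"
  shows "continuous_on UNIV g"
proof -
  have "isCont g x" for x
    by (rule continuous_on_interior[OF assms[of "x-1" "x+1"]]) auto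
  then show ?thesis by (simp add: continuous_at_imp_continuous_on)
qed

lemma H2_facts:
  assumes H: "H2_with_derivs v v1 v2"
  shows H2_v2int: "\<And>s t. integrable lborel (\<lambda>x. v2 x * indicator {s..t} x)"
    and H2_v2ftc: "\<And>s t. s \<le> t \<Longrightarrow> (\<integral>x. v2 x * indicator {s..t} x \<partial>lborel) = v1 t - v1 s"
    and H2_v1cont: "continuous_on UNIV v1"
    and H2_vderiv: "\<And>x. (v has_real_derivative v1 x) (at x)"
proof -
  have sv: "sq_integrable v" and sv1: "sq_integrable v1" and sv2: "sq_integrable v2"
    and ftc1: "\<And>a b. a \<le> b \<Longrightarrow> (v1 has_integral (v b - v a)) {a..b}"
    and ftc2: "\<And>a b. a \<le> b \<Longrightarrow> (v2 has_integral (v1 b - v1 a)) {a..b}"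
    using H unfolding H2_with_derivs_def by auto
  show i2: "integrable lborel (\<lambda>x. v2 x * indicator {s..t} x)" for s t
    by (rule sq_loc_int[OF sv2])
  show "(\<integral>x. v2 x * indicator {s..t} x \<partial>lborel) = v1 t - v1 s" if st: "s \<le> t" for s t
  proof -
    have si: "set_integrable lborel {s..t} v2"
      using i2[of s t] by (simp add: set_integrable_def mult.commute)
    have "(\<integral>x. v2 x * indicator {s..t} x \<partial>lborel) = (LINT x:{s..t}|lborel. v2 x)"
      by (simp add: set_lebesgue_integral_def mult.commute)
    also have "\<dots> = integral {s..t} v2" by (rule set_borel_integral_eq_integral(2)[OF si])
    also have "\<dots> = v1 t - v1 s" using ftc2[OF st] by (rule integral_unique)
    finally show ?thesis .
  qed
  have cv1: "continuous_on {a..b} v1" for a b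
  proof (cases "a \<le> b")
    case True
    have "continuous_on {a..b} (\<lambda>x. v1 a + integral {a..x} v2)"
      using ftc2[OF True] by (intro continuous_intros indefinite_integral_continuous_1) (auto simp: has_integral_integrable)
    moreover have "v1 x = v1 a + integral {a..x} v2" if "x \<in> {a..b}" for x
      using integral_unique[OF ftc2[of a x]] that by auto
    ultimately show ?thesis by (metis (no_types, lifting) continuous_on_cong)
  qed simp
  show cv: "continuous_on UNIV v1" by (rule cont_from_local[OF cv1])
  show "(v has_real_derivative v1 x) (at x)" for x
  proof -
    let ?a = "x - 1" and ?b = "x + 1"
    have "((\<lambda>y. integral {?a..y} v1) has_vector_derivative v1 x) (at x within {?a..?b})"
      by (rule integral_has_vector_derivative[OF cv1]) auto
    then have "((\<lambda>y. integral {?a..y} v1) has_vector_derivative v1 x) (at x within {?a<..<?b})"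
      by (rule has_vector_derivative_within_subset) auto
    then have "((\<lambda>y. integral {?a..y} v1) has_vector_derivative v1 x) (at x)"
      by (subst (asm) has_vector_derivative_within_open) auto
    then have d: "((\<lambda>y. v ?a + integral {?a..y} v1) has_real_derivative v1 x) (at x)"
      by (auto intro!: derivative_eq_intros simp: has_real_derivative_iff_has_vector_derivative)
    show ?thesis
    proof (rule has_field_derivative_transform_within_open[OF d, of "{?a<..<?b}"])
      fix y assume "y \<in> {?a<..<?b}"
      then show "v ?a + integral {?a..y} v1 = v y"
        using integral_unique[OF ftc1[of ?a y]] by auto
    qed auto
  qed
qed



lemma abs_prod_le: "\<bar>a * b :: real\<bar> \<le> a\<^sup>2 + b\<^sup>2"
proof -
  have "0 \<le> (\<bar>a\<bar> - \<bar>b\<bar>)\<^sup>2" by simp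
  then have "2 * (\<bar>a\<bar> * \<bar>b\<bar>) \<le> \<bar>a\<bar>\<^sup>2 + \<bar>b\<bar>\<^sup>2" by (simp add: power2_eq_square algebra_simps)
  moreover have "0 \<le> \<bar>a\<bar> * \<bar>b\<bar>" by simp
  ultimately have "\<bar>a\<bar> * \<bar>b\<bar> \<le> \<bar>a\<bar>\<^sup>2 + \<bar>b\<bar>\<^sup>2" by linarith
  then show ?thesis by (simp add: abs_mult)
qed

lemma int_cfg:
  fixes c f g :: "real \<Rightarrow> real"
  assumes cm: "c \<in> borel_measurable lborel" and cb: "\<And>x. \<bar>c x\<bar> \<le> K"
    and f: "sq_integrable f" and g: "sq_integrable g"
  shows "integrable lborel (\<lambda>x. c x * (f x * g x))"
proof (rule Bochner_Integration.integrable_bound[of _ "\<lambda>x. K * ((f x)\<^sup>2 + (g x)\<^sup>2)"])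
  have [measurable]: "f \<in> borel_measurable lborel" "g \<in> borel_measurable lborel"
    using f g by (auto simp: sq_integrable_def)
  show "integrable lborel (\<lambda>x. K * ((f x)\<^sup>2 + (g x)\<^sup>2))"
    using f g unfolding sq_integrable_def by (intro integrable_mult_right Bochner_Integration.integrable_add) auto
  show "(\<lambda>x. c x * (f x * g x)) \<in> borel_measurable lborel" using cm by measurable
  show "AE x in lborel. norm (c x * (f x * g x)) \<le> norm (K * ((f x)\<^sup>2 + (g x)\<^sup>2))"
  proof (rule AE_I2)
    fix x
    have K0: "K \<ge> 0" using cb[of x] by simp
    have "\<bar>f x * g x\<bar> \<le> (f x)\<^sup>2 + (g x)\<^sup>2"
      by (rule abs_prod_le)
    then have "\<bar>c x\<bar> * \<bar>f x * g x\<bar> \<le> K * ((f x)\<^sup>2 + (g x)\<^sup>2)"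
      using cb[of x] K0 by (intro mult_mono) auto
    then show "norm (c x * (f x * g x)) \<le> norm (K * ((f x)\<^sup>2 + (g x)\<^sup>2))"
      using K0 by (simp add: abs_mult)
  qed
qed



lemma abstract_identity:
  fixes u u' v v1 v2 :: "real \<Rightarrow> real" and B :: real
  assumes du: "\<And>x. (u has_real_derivative u' x) (at x)"
    and du': "\<And>x. (u' has_real_derivative ((u x)\<^sup>2 - 1) * u x) (at x)"
    and bu: "\<And>x. \<bar>u x\<bar> \<le> B" and bu': "\<And>x. \<bar>u' x\<bar> \<le> B"
    and H: "H2_with_derivs v v1 v2"
  shows "(\<integral>x. (v2 x)\<^sup>2 + 3 * (u x)\<^sup>2 * (v1 x)\<^sup>2 + ((u x)\<^sup>2 - 1) * (v x)\<^sup>2 \<partial>lborel)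
         - 2 * (\<integral>x. (v1 x)\<^sup>2 + ((u x)\<^sup>2 - 1) * (v x)\<^sup>2 \<partial>lborel)
       = (\<integral>x. (- v2 x + ((u x)\<^sup>2 - 1) * v x)\<^sup>2 \<partial>lborel)
         + (\<integral>x. (u x * v1 x - u' x * v x)\<^sup>2 \<partial>lborel)"
proof -
  have sv: "sq_integrable v" and sv1: "sq_integrable v1" and sv2: "sq_integrable v2"
    using H unfolding H2_with_derivs_def by auto
  have vm[measurable]: "v \<in> borel_measurable lborel" and v1m[measurable]: "v1 \<in> borel_measurable lborel"
    and v2m[measurable]: "v2 \<in> borel_measurable lborel"
    using sv sv1 sv2 by (auto simp: sq_integrable_def)
  have dv: "\<And>x. (v has_real_derivative v1 x) (at x)" by (rule H2_vderiv[OF H])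
  have cv1: "continuous_on UNIV v1" by (rule H2_v1cont[OF H])
  have cu: "continuous_on UNIV u" using du by (meson DERIV_isCont continuous_at_imp_continuous_on)
  have cu': "continuous_on UNIV u'" using du' by (meson DERIV_isCont continuous_at_imp_continuous_on)
  have cv: "continuous_on UNIV v" using dv by (meson DERIV_isCont continuous_at_imp_continuous_on)
  have um[measurable]: "u \<in> borel_measurable lborel" using borel_measurable_continuous_onI[OF cu] by simp
  have u'm[measurable]: "u' \<in> borel_measurable lborel" using borel_measurable_continuous_onI[OF cu'] by simp
  have B0: "B \<ge> 0" using bu[of 0] by simp
  have usq: "(u x)\<^sup>2 \<le> B\<^sup>2" for x using bu[of x] B0 by (simp add: abs_le_square_iff[symmetric])
  have u'sq: "(u' x)\<^sup>2 \<le> B\<^sup>2" for x using bu'[of x] B0 by (simp add: abs_le_square_iff[symmetric])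
  have uu': "\<bar>u x * u' x\<bar> \<le> B * B" for x
    using bu[of x] bu'[of x] B0 by (simp add: abs_mult mult_mono)
  have b1: "\<bar>(1::real)\<bar> \<le> 1" by simp
  have b2: "\<bar>3 * (u x)\<^sup>2\<bar> \<le> 3 * B\<^sup>2" for x using usq[of x] by simp
  have b3: "\<bar>(u x)\<^sup>2 - 1\<bar> \<le> B\<^sup>2 + 1" for x unfolding abs_le_iff using usq[of x] zero_le_power2[of "u x"] by linarith
  have b4: "\<bar>-2 * ((u x)\<^sup>2 - 1)\<bar> \<le> 2 * (B\<^sup>2 + 1)" for x using b3[of x] by (simp add: abs_mult)
  have b5: "\<bar>((u x)\<^sup>2 - 1)\<^sup>2\<bar> \<le> (B\<^sup>2 + 1)\<^sup>2" for x
    using b3[of x] by (simp add: abs_le_square_iff[symmetric])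
  have b6: "\<bar>(u x)\<^sup>2\<bar> \<le> B\<^sup>2" for x using usq[of x] by simp
  have b7: "\<bar>-2 * (u x * u' x)\<bar> \<le> 2 * (B * B)" for x using uu'[of x] by simp
  have b8: "\<bar>(u' x)\<^sup>2\<bar> \<le> B\<^sup>2" for x using u'sq[of x] by simp
  have b9: "\<bar>2 * ((u x)\<^sup>2 - 1)\<bar> \<le> 2 * (B\<^sup>2 + 1)" for x using b3[of x] by (simp add: abs_mult)
  have b10: "\<bar>- (u x * u' x)\<bar> \<le> B * B" for x using uu'[of x] by simp
  define A where "A x = (v2 x)\<^sup>2 + 3 * (u x)\<^sup>2 * (v1 x)\<^sup>2 + ((u x)\<^sup>2 - 1) * (v x)\<^sup>2" for x
  define Bf where "Bf x = (v1 x)\<^sup>2 + ((u x)\<^sup>2 - 1) * (v x)\<^sup>2" for x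
  define C where "C x = (- v2 x + ((u x)\<^sup>2 - 1) * v x)\<^sup>2" for x
  define Ef where "Ef x = (u x * v1 x - u' x * v x)\<^sup>2" for x
  define D where "D x = A x - 2 * Bf x - C x - Ef x" for x
  define h where "h x = 2 * ((u x)\<^sup>2 - 1) * v x * v1 x - u x * u' x * (v x)\<^sup>2" for x
  have iA: "integrable lborel A"
  proof -
    have "integrable lborel (\<lambda>x. (\<lambda>x. 1) x * (v2 x * v2 x) + ((\<lambda>x. 3 * (u x)\<^sup>2) x * (v1 x * v1 x)
            + (\<lambda>x. (u x)\<^sup>2 - 1) x * (v x * v x)))"
      by (intro Bochner_Integration.integrable_add int_cfg[OF _ b1 sv2 sv2] int_cfg[OF _ b2 sv1 sv1]
            int_cfg[OF _ b3 sv sv]) measurable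
    then show ?thesis unfolding A_def by (simp add: power2_eq_square algebra_simps)
  qed
  have iB: "integrable lborel Bf"
  proof -
    have "integrable lborel (\<lambda>x. (\<lambda>x. 1) x * (v1 x * v1 x) + (\<lambda>x. (u x)\<^sup>2 - 1) x * (v x * v x))"
      by (intro Bochner_Integration.integrable_add int_cfg[OF _ b1 sv1 sv1] int_cfg[OF _ b3 sv sv]) measurable
    then show ?thesis unfolding Bf_def by (simp add: power2_eq_square algebra_simps)
  qed
  have iC: "integrable lborel C"
  proof -
    have "integrable lborel (\<lambda>x. (\<lambda>x. 1) x * (v2 x * v2 x) + ((\<lambda>x. -2 * ((u x)\<^sup>2 - 1)) x * (v x * v2 x)
            + (\<lambda>x. ((u x)\<^sup>2 - 1)\<^sup>2) x * (v x * v x)))"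
      by (intro Bochner_Integration.integrable_add int_cfg[OF _ b1 sv2 sv2] int_cfg[OF _ b4 sv sv2]
            int_cfg[OF _ b5 sv sv]) measurable
    then show ?thesis unfolding C_def by (simp add: power2_eq_square algebra_simps)
  qed
  have iE: "integrable lborel Ef"
  proof -
    have "integrable lborel (\<lambda>x. (\<lambda>x. (u x)\<^sup>2) x * (v1 x * v1 x) + ((\<lambda>x. -2 * (u x * u' x)) x * (v x * v1 x)
            + (\<lambda>x. (u' x)\<^sup>2) x * (v x * v x)))"
      by (intro Bochner_Integration.integrable_add int_cfg[OF _ b6 sv1 sv1] int_cfg[OF _ b7 sv sv1]
            int_cfg[OF _ b8 sv sv]) measurable
    then show ?thesis unfolding Ef_def by (simp add: power2_eq_square algebra_simps)
  qed
  have ih: "integrable lborel h"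
  proof -
    have "integrable lborel (\<lambda>x. (\<lambda>x. 2 * ((u x)\<^sup>2 - 1)) x * (v x * v1 x) + (\<lambda>x. - (u x * u' x)) x * (v x * v x))"
      by (intro Bochner_Integration.integrable_add int_cfg[OF _ b9 sv sv1] int_cfg[OF _ b10 sv sv]) measurable
    then show ?thesis unfolding h_def by (simp add: power2_eq_square algebra_simps)
  qed
  have iD: "integrable lborel D"
    unfolding D_def using iA iB iC iE by simp
  define P where "P x = 2 * ((u x)\<^sup>2 - 1) * v x" for x
  define P' where "P' x = 4 * u x * u' x * v x + 2 * ((u x)\<^sup>2 - 1) * v1 x" for x
  define Q where "Q x = - u x * u' x * (v x)\<^sup>2" for x
  define Q' where "Q' x = - ((u' x)\<^sup>2 + (u x)\<^sup>2 * ((u x)\<^sup>2 - 1)) * (v x)\<^sup>2 - 2 * u x * u' x * v x * v1 x" for x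
  have dP: "(P has_real_derivative P' x) (at x)" for x
    unfolding P_def[abs_def]
    by (rule derivative_eq_intros du dv refl)+ (simp add: P'_def algebra_simps)
  have dQ: "(Q has_real_derivative Q' x) (at x)" for x
    unfolding Q_def[abs_def]
    by (rule derivative_eq_intros du du' dv refl)+ (simp add: Q'_def algebra_simps power2_eq_square)
  have cP': "continuous_on UNIV P'"
    unfolding P'_def[abs_def] using cu cu' cv cv1 by (intro continuous_intros)
  have cQ': "continuous_on UNIV Q'"
    unfolding Q'_def[abs_def] using cu cu' cv cv1 by (intro continuous_intros)
  have pw: "D x = P x * v2 x + P' x * v1 x + Q' x" for x
    unfolding D_def A_def Bf_def C_def Ef_def P_def P'_def Q'_def by algebra
  have hPQ: "h x = P x * v1 x + Q x" for x
    unfolding h_def P_def Q_def by (simp add: algebra_simps)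
  have key: "(\<integral>x. D x * indicator {a..b} x \<partial>lborel) = h b - h a" if ab: "a \<le> b" for a b
  proof -
    have wpr: "(\<integral>x. P x * v2 x * indicator {a..b} x \<partial>lborel)
          = P b * v1 b - P a * v1 a - (\<integral>x. P' x * v1 x * indicator {a..b} x \<partial>lborel)"
      by (rule weak_prod_rule[OF ab dP cP' cv1 v2m H2_v2int[OF H] H2_v2ftc[OF H]])
    have fq: "(\<integral>x. Q' x * indicator {a..b} x \<partial>lborel) = Q b - Q a"
      using dQ cQ' by (intro integral_FTC_Icc_real[OF ab]) (auto simp: continuous_on_eq_continuous_at)
    have iDi: "integrable lborel (\<lambda>x. D x * indicator {a..b} x)"
      using iD by (rule integrable_real_mult_indicator[rotated]) simp
    have i1: "integrable lborel (\<lambda>x. P' x * v1 x * indicator {a..b} x)"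
      using cP' cv1 by (intro borel_integrable_atLeastAtMost) (auto simp: continuous_on_eq_continuous_at intro!: continuous_intros)
    have i2: "integrable lborel (\<lambda>x. Q' x * indicator {a..b} x)"
      using cQ' by (intro borel_integrable_atLeastAtMost) (auto simp: continuous_on_eq_continuous_at)
    have e1: "(\<lambda>x. P x * v2 x * indicator {a..b} x)
        = (\<lambda>x. D x * indicator {a..b} x - (P' x * v1 x * indicator {a..b} x + Q' x * indicator {a..b} x))"
      by (rule ext) (simp add: pw algebra_simps)
    have i0: "integrable lborel (\<lambda>x. P x * v2 x * indicator {a..b} x)"
      unfolding e1 using iDi i1 i2 by simp
    have e2: "(\<lambda>x. D x * indicator {a..b} x)
        = (\<lambda>x. P x * v2 x * indicator {a..b} x + (P' x * v1 x * indicator {a..b} x + Q' x * indicator {a..b} x))"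
      by (rule ext) (simp add: pw algebra_simps)
    have "(\<integral>x. D x * indicator {a..b} x \<partial>lborel)
        = (\<integral>x. P x * v2 x * indicator {a..b} x \<partial>lborel) + ((\<integral>x. P' x * v1 x * indicator {a..b} x \<partial>lborel)
           + (\<integral>x. Q' x * indicator {a..b} x \<partial>lborel))"
      unfolding e2 using i0 i1 i2 by simp
    also have "\<dots> = h b - h a" unfolding wpr fq hPQ by simp
    finally show ?thesis .
  qed
  have D0: "(\<integral>x. D x \<partial>lborel) = 0"
    by (rule integral_total_deriv_zero[OF ih iD key])
  have "(\<integral>x. D x \<partial>lborel) = (\<integral>x. A x \<partial>lborel) - 2 * (\<integral>x. Bf x \<partial>lborel) - (\<integral>x. C x \<partial>lborel) - (\<integral>x. Ef x \<partial>lborel)"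
    unfolding D_def using iA iB iC iE by simp
  then show ?thesis using D0 unfolding A_def Bf_def C_def Ef_def by simp
qed



lemma tanh_case:
  defines "u \<equiv> \<lambda>x::real. tanh (x / sqrt 2)"
  defines "u' \<equiv> \<lambda>x::real. (1 - (tanh (x / sqrt 2))\<^sup>2) / sqrt 2"
  shows "\<And>x. (u has_real_derivative u' x) (at x)"
    and "\<And>x. (u' has_real_derivative ((u x)\<^sup>2 - 1) * u x) (at x)"
    and "\<And>x. \<bar>u x\<bar> \<le> 1" and "\<And>x. \<bar>u' x\<bar> \<le> 1"
proof -
  have ch: "cosh (y::real) \<noteq> 0" for y using cosh_real_pos[of y] by simp
  fix x :: real
  have d1: "((\<lambda>x. x / sqrt 2) has_real_derivative 1 / sqrt 2) (at x)"
    using DERIV_cdivide[OF DERIV_ident, where c = "sqrt 2" and x = x and s = UNIV] by simp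
  have d2: "((\<lambda>x. tanh (x / sqrt 2)) has_real_derivative (1 - tanh (x / sqrt 2) ^ 2) * (1 / sqrt 2)) (at x)"
    by (rule has_field_derivative_tanh[OF ch d1])
  show "(u has_real_derivative u' x) (at x)"
    unfolding u_def u'_def by (rule DERIV_cong[OF d2]) simp
  note d3 = DERIV_power[OF d2, where n = 2]
  note d4 = DERIV_diff[OF DERIV_const[where k = 1] d3]
  note d5 = DERIV_cdivide[OF d4, where c = "sqrt 2"]
  show "(u' has_real_derivative ((u x)\<^sup>2 - 1) * u x) (at x)"
    unfolding u_def u'_def by (rule DERIV_cong[OF d5]) (simp add: field_simps power2_eq_square)
next
  show "\<bar>u x\<bar> \<le> 1" for x unfolding u_def
    using tanh_real_lt_1[of "x / sqrt 2"] tanh_real_gt_neg1[of "x / sqrt 2"] by simp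
  show "\<bar>u' x\<bar> \<le> 1" for x
  proof -
    let ?t = "tanh (x / sqrt 2)"
    have "\<bar>?t\<bar> \<le> 1" using tanh_real_lt_1[of "x / sqrt 2"] tanh_real_gt_neg1[of "x / sqrt 2"] by simp
    then have "?t\<^sup>2 \<le> 1" by (simp add: abs_le_square_iff[symmetric] abs_square_le_1)
    then have a: "0 \<le> 1 - ?t\<^sup>2" "1 - ?t\<^sup>2 \<le> 1" by simp_all
    have s: "1 \<le> sqrt (2::real)" by simp
    have "1 - ?t\<^sup>2 \<le> sqrt 2" using a s by linarith
    then have "(1 - ?t\<^sup>2) / sqrt 2 \<le> 1" by (simp add: divide_le_eq)
    moreover have "0 \<le> (1 - ?t\<^sup>2) / sqrt 2" using a by simp
    ultimately have "\<bar>(1 - ?t\<^sup>2) / sqrt 2\<bar> \<le> 1" by (intro abs_leI) linarith+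
    then show ?thesis unfolding u'_def .
  qed
qed



definition egf :: "real \<Rightarrow> real \<Rightarrow> real" where
  "egf k \<theta> = 1 / sqrt (1 - k\<^sup>2 * (sin \<theta>)\<^sup>2)"

lemma ellipticF_egf:
  "ellipticF k \<phi> = (if 0 \<le> \<phi> then integral {0..\<phi>} (egf k) else - integral {\<phi>..0} (egf k))"
  unfolding ellipticF_def egf_def[abs_def] by simp

context
  fixes k :: real
  assumes k: "k\<^sup>2 < 1"
begin

lemma egf_arg_pos: "0 < 1 - k\<^sup>2 * (sin \<theta>)\<^sup>2"
proof -
  have s: "(sin \<theta>)\<^sup>2 \<le> 1" using sin_cos_squared_add[of \<theta>] zero_le_power2[of "cos \<theta>"] by linarith
  have "k\<^sup>2 * (sin \<theta>)\<^sup>2 \<le> k\<^sup>2" using mult_left_le[OF s zero_le_power2[of k]] .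
  then show ?thesis using k by linarith
qed

lemma egf_arg_le1: "1 - k\<^sup>2 * (sin \<theta>)\<^sup>2 \<le> 1"
  by simp

lemma egf_cont: "continuous_on UNIV (egf k)"
proof -
  have nz: "sqrt (1 - k\<^sup>2 * (sin \<theta>)\<^sup>2) \<noteq> 0" for \<theta>
    using egf_arg_pos[of \<theta>] by (metis less_irrefl real_sqrt_eq_zero_cancel_iff)
  show ?thesis unfolding egf_def[abs_def] using nz by (intro continuous_intros) auto
qed

lemma egf_ge1: "1 \<le> egf k \<theta>"
proof -
  have "sqrt (1 - k\<^sup>2 * (sin \<theta>)\<^sup>2) \<le> 1" by simp
  moreover have "0 < sqrt (1 - k\<^sup>2 * (sin \<theta>)\<^sup>2)" using egf_arg_pos by simp
  ultimately show ?thesis unfolding egf_def by (simp add: le_divide_eq)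
qed

lemma egf_int: "egf k integrable_on {a..b}"
  by (rule integrable_continuous_interval) (rule continuous_on_subset[OF egf_cont subset_UNIV])

lemma ellF_local:
  assumes "0 \<le> R" "-R \<le> \<phi>" "\<phi> \<le> R"
  shows "ellipticF k \<phi> = integral {-R..\<phi>} (egf k) - integral {-R..0} (egf k)"
proof (cases "0 \<le> \<phi>")
  case True
  have "integral {-R..0} (egf k) + integral {0..\<phi>} (egf k) = integral {-R..\<phi>} (egf k)"
    by (rule Henstock_Kurzweil_Integration.integral_combine) (use assms True egf_int in auto)
  then show ?thesis using True by (simp add: ellipticF_egf)
next
  case False
  have "integral {-R..\<phi>} (egf k) + integral {\<phi>..0} (egf k) = integral {-R..0} (egf k)"
    by (rule Henstock_Kurzweil_Integration.integral_combine) (use assms False egf_int in auto)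
  then show ?thesis using False by (simp add: ellipticF_egf)
qed

lemma ellF_deriv: "(ellipticF k has_real_derivative egf k \<phi>) (at \<phi>)"
proof -
  define R where "R = \<bar>\<phi>\<bar> + 1"
  have R0: "0 \<le> R" by (simp add: R_def)
  have "((\<lambda>y. integral {-R..y} (egf k)) has_vector_derivative egf k \<phi>) (at \<phi> within {-R..R})"
    by (rule integral_has_vector_derivative[OF continuous_on_subset[OF egf_cont subset_UNIV]]) (auto simp: R_def)
  then have "((\<lambda>y. integral {-R..y} (egf k)) has_vector_derivative egf k \<phi>) (at \<phi> within {-R<..<R})"
    by (rule has_vector_derivative_within_subset) auto
  then have "((\<lambda>y. integral {-R..y} (egf k)) has_vector_derivative egf k \<phi>) (at \<phi>)"
    by (subst (asm) has_vector_derivative_within_open) (auto simp: R_def)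
  then have d: "((\<lambda>y. integral {-R..y} (egf k) - integral {-R..0} (egf k)) has_real_derivative egf k \<phi>) (at \<phi>)"
    by (auto intro!: derivative_eq_intros simp: has_real_derivative_iff_has_vector_derivative)
  show ?thesis
  proof (rule has_field_derivative_transform_within_open[OF d, of "{-R<..<R}"])
    fix y assume "y \<in> {-R<..<R}"
    then show "integral {-R..y} (egf k) - integral {-R..0} (egf k) = ellipticF k y"
      using ellF_local[OF R0, of y] by auto
  qed (auto simp: R_def)
qed

lemma ellF_cont: "isCont (ellipticF k) \<phi>"
  using ellF_deriv DERIV_isCont by blast

lemma ellF_0: "ellipticF k 0 = 0"
  by (simp add: ellipticF_egf)

lemma ellF_strict: "a < b \<Longrightarrow> ellipticF k a < ellipticF k b"
proof (rule DERIV_pos_imp_increasing[of a b "ellipticF k"])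
  fix x show "\<exists>y. (ellipticF k has_real_derivative y) (at x) \<and> 0 < y"
    by (intro exI[of _ "egf k x"] conjI ellF_deriv) (use egf_ge1[of x] in linarith)
qed

lemma ellF_ge: "0 \<le> \<phi> \<Longrightarrow> \<phi> \<le> ellipticF k \<phi>"
proof -
  assume "0 \<le> \<phi>"
  have "ellipticF k 0 - 0 \<le> ellipticF k \<phi> - \<phi>"
  proof (rule DERIV_nonneg_imp_nondecreasing[OF \<open>0 \<le> \<phi>\<close>])
    fix x show "\<exists>y. ((\<lambda>x. ellipticF k x - x) has_real_derivative y) (at x) \<and> 0 \<le> y"
      using DERIV_diff[OF ellF_deriv[of x] DERIV_ident] egf_ge1[of x] by auto
  qed
  then show ?thesis by (simp add: ellF_0)
qed

lemma ellF_le: "\<phi> \<le> 0 \<Longrightarrow> ellipticF k \<phi> \<le> \<phi>"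
proof -
  assume "\<phi> \<le> 0"
  have "ellipticF k \<phi> - \<phi> \<le> ellipticF k 0 - 0"
  proof (rule DERIV_nonneg_imp_nondecreasing[OF \<open>\<phi> \<le> 0\<close>])
    fix x show "\<exists>y. ((\<lambda>x. ellipticF k x - x) has_real_derivative y) (at x) \<and> 0 \<le> y"
      using DERIV_diff[OF ellF_deriv[of x] DERIV_ident] egf_ge1[of x] by auto
  qed
  then show ?thesis by (simp add: ellF_0)
qed

lemma ellF_ex1: "\<exists>!\<phi>. ellipticF k \<phi> = y"
proof -
  have "\<exists>\<phi>. -\<bar>y\<bar> \<le> \<phi> \<and> \<phi> \<le> \<bar>y\<bar> \<and> ellipticF k \<phi> = y"
  proof (rule IVT')
    show "ellipticF k (- \<bar>y\<bar>) \<le> y" using ellF_le[of "-\<bar>y\<bar>"] by simp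
    show "y \<le> ellipticF k \<bar>y\<bar>" using ellF_ge[of "\<bar>y\<bar>"] by simp
    show "continuous_on {- \<bar>y\<bar>..\<bar>y\<bar>} (ellipticF k)"
      using ellF_cont by (simp add: continuous_at_imp_continuous_on)
  qed simp
  moreover have "\<phi>1 = \<phi>2" if "ellipticF k \<phi>1 = y" "ellipticF k \<phi>2 = y" for \<phi>1 \<phi>2
    using ellF_strict[of \<phi>1 \<phi>2] ellF_strict[of \<phi>2 \<phi>1] that by (cases "\<phi>1 < \<phi>2"; cases "\<phi>2 < \<phi>1") auto
  ultimately show ?thesis by blast
qed

lemma am_inv: "ellipticF k (jacobi_am k y) = y"
  unfolding jacobi_am_def by (rule theI'[OF ellF_ex1])

lemma am_inv2: "jacobi_am k (ellipticF k \<phi>) = \<phi>"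
  using ellF_ex1[of "ellipticF k \<phi>"] am_inv[of "ellipticF k \<phi>"] by blast

lemma am_cont: "isCont (jacobi_am k) y"
proof -
  have "isCont (jacobi_am k) (ellipticF k (jacobi_am k y))"
    by (rule isCont_inverse_function[where d=1]) (auto simp: am_inv2 ellF_cont)
  then show ?thesis by (simp add: am_inv)
qed

lemma am_deriv: "(jacobi_am k has_real_derivative sqrt (1 - k\<^sup>2 * (sin (jacobi_am k y))\<^sup>2)) (at y)"
proof -
  have "(jacobi_am k has_real_derivative inverse (egf k (jacobi_am k y))) (at y)"
  proof (rule DERIV_inverse_function[where a="y - 1" and b="y + 1"])
    show "(ellipticF k has_real_derivative egf k (jacobi_am k y)) (at (jacobi_am k y))" by (rule ellF_deriv)
    show "egf k (jacobi_am k y) \<noteq> 0" using egf_ge1[of "jacobi_am k y"] by simp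
  qed (auto simp: am_inv am_cont)
  then show ?thesis by (simp add: egf_def)
qed

end



lemma jacobi_case:
  fixes a b k :: real
  assumes k: "k\<^sup>2 < 1" and hb: "b\<^sup>2 * (1 + k\<^sup>2) = 1" and hk: "2 * b\<^sup>2 * k\<^sup>2 = a\<^sup>2"
    and a0: "0 \<le> a" and a1: "a \<le> 1" and b0: "0 \<le> b" and b1: "b \<le> 1"
  defines "u \<equiv> \<lambda>x. a * jacobi_sn k (x * b)"
  defines "u' \<equiv> \<lambda>x. a * b * (cos (jacobi_am k (x * b)) * sqrt (1 - k\<^sup>2 * (sin (jacobi_am k (x * b)))\<^sup>2))"
  shows "\<And>x. (u has_real_derivative u' x) (at x)"
    and "\<And>x. (u' has_real_derivative ((u x)\<^sup>2 - 1) * u x) (at x)"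
    and "\<And>x. \<bar>u x\<bar> \<le> 1" and "\<And>x. \<bar>u' x\<bar> \<le> 1"
proof -
  define am where "am = jacobi_am k"
  define dn where "dn y = sqrt (1 - k\<^sup>2 * (sin (am y))\<^sup>2)" for y
  have pos: "0 < 1 - k\<^sup>2 * (sin (am y))\<^sup>2" for y by (rule egf_arg_pos[OF k])
  have dnpos: "0 < dn y" for y using pos[of y] by (simp add: dn_def)
  have dnsq: "(dn y)\<^sup>2 = 1 - k\<^sup>2 * (sin (am y))\<^sup>2" for y using pos[of y] by (simp add: dn_def)
  have dam: "(am has_real_derivative dn y) (at y)" for y
    unfolding am_def dn_def by (rule am_deriv[OF k])
  have dsn: "((\<lambda>y. sin (am y)) has_real_derivative cos (am y) * dn y) (at y)" for y
    using DERIV_chain2[OF DERIV_sin dam] by simp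
  have dcn: "((\<lambda>y. cos (am y)) has_real_derivative - sin (am y) * dn y) (at y)" for y
    using DERIV_chain2[OF DERIV_cos dam] by simp
  have ddn: "(dn has_real_derivative - k\<^sup>2 * sin (am y) * cos (am y)) (at y)" for y
  proof -
    note p = DERIV_power[OF dsn[of y], where n=2]
    note d1 = DERIV_diff[OF DERIV_const[where k=1] DERIV_cmult[OF p, where c="k\<^sup>2"]]
    note d2 = DERIV_chain2[OF DERIV_real_sqrt[OF pos[of y]] d1]
    have e: "sqrt (1 - k\<^sup>2 * (sin (am y))\<^sup>2) = dn y" by (simp add: dn_def)
    show ?thesis unfolding dn_def[abs_def]
      by (rule DERIV_cong[OF d2]) (use dnpos[of y] in \<open>simp add: e field_simps\<close>)
  qed
  have u_eq: "u = (\<lambda>x. a * sin (am (x * b)))" by (simp add: u_def jacobi_sn_def am_def)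
  have u'_eq: "u' = (\<lambda>x. a * b * (cos (am (x * b)) * dn (x * b)))" by (simp add: u'_def dn_def am_def)
  fix x :: real
  note gb = DERIV_cmult_right[OF DERIV_ident, where c=b and x=x and s=UNIV]
  note c1 = DERIV_cmult[OF DERIV_chain2[OF dsn gb], where c=a]
  show "(u has_real_derivative u' x) (at x)"
    unfolding u_eq u'_eq by (rule DERIV_cong[OF c1]) (simp add: algebra_simps)
  note c2 = DERIV_cmult[OF DERIV_chain2[OF DERIV_mult[OF dcn ddn] gb], where c="a*b"]
  have s2: "(sin (am (x * b)))\<^sup>2 + (cos (am (x * b)))\<^sup>2 = 1" by simp
  have d2: "(dn (x * b))\<^sup>2 = 1 - k\<^sup>2 * (sin (am (x * b)))\<^sup>2" by (rule dnsq)
  show "(u' has_real_derivative ((u x)\<^sup>2 - 1) * u x) (at x)"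
    unfolding u_eq u'_eq
  proof (rule DERIV_cong[OF c2])
    show "a * b * ((- sin (am (x * b)) * dn (x * b) * dn (x * b) +
          - k\<^sup>2 * sin (am (x * b)) * cos (am (x * b)) * cos (am (x * b))) * (1 * b)) =
        ((a * sin (am (x * b)))\<^sup>2 - 1) * (a * sin (am (x * b)))"
      using s2 d2 hb hk by algebra
  qed
  fix x :: real
  have "\<bar>sin (am (x * b))\<bar> \<le> 1" by (rule abs_sin_le_one)
  then have "a * \<bar>sin (am (x * b))\<bar> \<le> 1 * 1" using a0 a1 by (intro mult_mono) auto
  then show "\<bar>u x\<bar> \<le> 1" using a0 by (simp add: u_def jacobi_sn_def am_def abs_mult)
  fix x :: real
  have c: "\<bar>cos (am (x * b))\<bar> \<le> 1" by (rule abs_cos_le_one)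
  have d: "dn (x * b) \<le> 1" "0 \<le> dn (x * b)" using dnpos[of "x*b"] by (auto simp: dn_def)
  have "\<bar>cos (am (x * b))\<bar> * dn (x * b) \<le> 1 * 1" using c d by (intro mult_mono) auto
  moreover have "a * b \<le> 1 * 1" using a0 a1 b0 b1 by (intro mult_mono) auto
  ultimately have "(a * b) * (\<bar>cos (am (x * b))\<bar> * dn (x * b)) \<le> 1 * 1"
    using a0 b0 d by (intro mult_mono) auto
  then show "\<bar>u' x\<bar> \<le> 1" using a0 b0 d by (simp add: u'_def dn_def am_def abs_mult)
qed



lemma u0_ode:
  assumes E0: "0 \<le> E" and E1: "E \<le> 1"
  obtains u' where "\<And>x. (u0 E has_real_derivative u' x) (at x)"
    "\<And>x. (u' has_real_derivative ((u0 E x)\<^sup>2 - 1) * u0 E x) (at x)"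
    "\<And>x. \<bar>u0 E x\<bar> \<le> 1" "\<And>x. \<bar>u' x\<bar> \<le> 1"
proof -
  consider "E = 0" | "E = 1" | "0 < E \<and> E < 1" using E0 E1 by linarith
  then show ?thesis
  proof cases
    case 1
    then have e: "u0 E = (\<lambda>x. tanh (x / sqrt 2))" by (simp add: u0_def[abs_def])
    show ?thesis
      by (rule that[of "\<lambda>x. (1 - (tanh (x / sqrt 2))\<^sup>2) / sqrt 2"]; (unfold e)?; rule tanh_case)
  next
    case 2
    then have e: "u0 E = (\<lambda>x. 0)" by (simp add: u0_def[abs_def])
    show ?thesis by (rule that[of "\<lambda>x. 0"]) (simp_all add: e)
  next
    case 3
    define a where "a = sqrt (1 - E)"
    define b where "b = sqrt ((1 + E) / 2)"
    define k where "k = sqrt ((1 - E) / (1 + E))"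
    have e: "u0 E = (\<lambda>x. a * jacobi_sn k (x * b))" using 3 by (auto simp: u0_def[abs_def] a_def b_def k_def)
    have k2: "k\<^sup>2 = (1 - E) / (1 + E)" using 3 by (simp add: k_def)
    have b2: "b\<^sup>2 = (1 + E) / 2" using 3 by (simp add: b_def)
    have a2: "a\<^sup>2 = 1 - E" using 3 by (simp add: a_def)
    have k: "k\<^sup>2 < 1" using 3 by (simp add: k2 divide_less_eq)
    have hb: "b\<^sup>2 * (1 + k\<^sup>2) = 1" using 3 unfolding b2 k2 by (simp add: field_simps)
    have hk: "2 * b\<^sup>2 * k\<^sup>2 = a\<^sup>2" using 3 unfolding b2 k2 a2 by (simp add: field_simps)
    have a0: "0 \<le> a" and a1: "a \<le> 1" and b0: "0 \<le> b" and b1: "b \<le> 1"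
      using 3 by (auto simp: a_def b_def)
    note J = jacobi_case[OF k hb hk a0 a1 b0 b1]
    show ?thesis
      by (rule that[of "\<lambda>x. a * b * (cos (jacobi_am k (x * b)) * sqrt (1 - k\<^sup>2 * (sin (jacobi_am k (x * b)))\<^sup>2))"];
          (unfold e)?; rule J)
  qed
qed

theorem lemma4p1:
  fixes E :: real and v v1 v2 :: "real \<Rightarrow> real"
  assumes "0 \<le> E" and "E \<le> 1"
    and "H2_with_derivs v v1 v2"
  shows "(\<integral>x. (v2 x)\<^sup>2 + 3 * (u0 E x)\<^sup>2 * (v1 x)\<^sup>2 + ((u0 E x)\<^sup>2 - 1) * (v x)\<^sup>2 \<partial>lborel)
         - 2 * (\<integral>x. (v1 x)\<^sup>2 + ((u0 E x)\<^sup>2 - 1) * (v x)\<^sup>2 \<partial>lborel)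
       = (\<integral>x. (- v2 x + ((u0 E x)\<^sup>2 - 1) * v x)\<^sup>2 \<partial>lborel)
         + (\<integral>x. (u0 E x * v1 x - deriv (u0 E) x * v x)\<^sup>2 \<partial>lborel)"
proof -
  obtain u' where d: "\<And>x. (u0 E has_real_derivative u' x) (at x)"
    and d': "\<And>x. (u' has_real_derivative ((u0 E x)\<^sup>2 - 1) * u0 E x) (at x)"
    and b: "\<And>x. \<bar>u0 E x\<bar> \<le> 1" and b': "\<And>x. \<bar>u' x\<bar> \<le> 1"
    using u0_ode[OF assms(1,2)] by metis
  have "deriv (u0 E) = u'" by (rule ext) (rule DERIV_imp_deriv[OF d])
  then show ?thesis using abstract_identity[OF d d' b b' assms(3)] by simp
qed


end
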